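(* Let $r_0\in\mathbb{R}^7$ and let $\vartheta:\mathbb{R}^7\times\mathbb{R}^2\to\mathbb{R}$ be a function such that (i) for every $z=(z_1,z_2)\in\mathbb{R}^2$: $\vartheta(r_0,z)\le 0$ if and only if there exist $t_f\in[0,\infty)$ and $(\mathbf r,\mathbf u)\in\Pi^{\mathcal K,\mathcal C}_{r_0,t_f}$ with $J_1(\mathbf r(1),t_f)\le z_1$ and $J_2(\mathbf r(1),t_f)\le z_2$; (ii) for all $z,z'\in\mathbb{R}^2$ with $z\le z'$ (componentwise), $\vartheta(r_0,z)\ge\vartheta(r_0,z')$. Let $z^*(r_0)=(z^*_1(r_0),z^*_2(r_0))$ be the utopian point and assume $\Pi^{\mathcal K,\mathcal C}_{r_0,z_2^*(r_0)}\neq\emptyset$. For $\mu=(\mu_1,\mu_2)\in[0,1]^2$ define $$\Theta_{r_0}(\mu):=\inf\Big\{\tau\ge 0\;:\;\vartheta(r_0,z^*(r_0)+\mu\tau)\le 0\ \text{and}\ \tau<\tfrac{m_{\mathrm{prop}}}{\mu_1}\Big\}\in[0,\infty],$$ and $$\Sigma_{r_0}:=\Big\{z^*(r_0)+\mu\,\Theta_{r_0}(\mu)\;:\;\mu\in[0,1]^2,\ \mu_1+\mu_2=1\Big\}.$$ Then every trajectory reconstructed from $\Sigma_{r_0}$ is weakly Pareto optimal: if $z\in\Sigma_{r_0}$, $t_f\in[0,\infty)$ and $(\mathbf r,\mathbf u)\in\Pi^{\mathcal K,\mathcal C}_{r_0,t_f}$ satisfy $J(\mathbf r(1),t_f)\le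 z$, then there is no $\hat t_f\in[0,\infty)$ and no $(\mathbf x,\mathbf v)\in\Pi^{\mathcal K,\mathcal C}_{r_0,\hat t_f}$ with $J(\mathbf x(1),\hat t_f)<J(\mathbf r(1),t_f)$.
   Context: Fixed data: a rotation rate $\Omega\ge 0$, an exhaust velocity $v_{e}>0$, masses $m_{\mathrm{dry}}>0$, $m_{\mathrm{prop}}>0$ with $m_{\min}:=m_{\mathrm{dry}}$, $m_{\max}:=m_{\mathrm{dry}}+m_{\mathrm{prop}}$, radii $0<\rho_{\min}<\rho_{\max}$, a gravitational potential $U:\mathbb{R}^3\to\mathbb{R}$ with partial derivatives $U_x,U_y,U_z$, and a control set $\mathcal U\subset\mathbb{R}^3$. States are $r=(x,y,z,v_x,v_y,v_z,m)\in\mathbb{R}^7$ and the dynamics are $\tilde f(r,u)=\big(v_x,\ v_y,\ v_z,\ U_x(x,y,z)+\Omega^2x+2\Omega v_y+\tfrac{u_x}{m},\ U_y(x,y,z)+\Omega^2y-2\Omega v_x+\tfrac{u_y}{m},\ U_z(x,y,z)+\tfrac{u_z}{m},\ -\tfrac{\sqrt{u_x^2+u_y^2+u_z^2}}{v_e}\big)$ for $u=(u_x,u_y,u_z)\in\mathcal U$. For $t_f\ge0$ put $f(r,u,t_f):=t_f\,\tilde f(r,u)$ (time rescaled to $[0,1]$). $\mathcal U_{ad}$ is the set of Lebesgue measurable functions with values in $\mathcal U$. $\mathcal K_0:=\{r\in\mathbb{R}^7:\sqrt{x^2+y^2+z^2}\in[\rho_{\min},\rho_{\max}],\ m\in(m_{\min},m_{\max}]\}$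 and $\mathcal K:=\{r\in\mathcal K_0:\exists u\in\mathcal U,\ \tilde f(r,u)\cdot\eta_r<0\}$, where $\eta_r$ is the exterior normal to $\mathcal K$ at $r$. Given $r_{\mathrm{target}}\in\mathbb{R}^7$ and $\epsilon>0$, $\mathcal C:=\{r\in\mathcal K:|r_{\mathrm{target}}-r|<\epsilon\}$, assumed nonempty and closed. $\Pi_{r_0,t_f}$ is the set of pairs $(\mathbf r,\mathbf u)$ with $\mathbf r\in W^{1,1}([0,1];\mathbb{R}^7)$, $\mathbf u\in\mathcal U_{ad}$, $\dot{\mathbf r}(s)=f(\mathbf r(s),\mathbf u(s),t_f)$ for $s\in[0,1]$, $\mathbf r(0)=r_0$. $\Pi^{\mathcal K,\mathcal C}_{r_0,t_f}$ is the subset with $\mathbf r(s)\in\mathcal K$ for all $s\in[0,1]$ and $\mathbf r(1)$ in the interior of $\mathcal C$. $\pi:=\{(r_0,t_f)\in\mathcal K\times[0,\infty):\Pi^{\mathcal K,\mathcal C}_{r_0,t_f}\ne\emptyset\}$. Objectives: $J(r_f,t_f)=(J_1,J_2)$ with $J_1(r_f,t_f):=-(r_f)_7$ (minus the final mass) and $J_2(r_f,t_f):=t_f$. Vector order: $a\le b$ iff $a_i\le b_i$ for all $i$; $a<b$ iff $a_i<b_i$ for all $i$. Utopian point: $z_i^*(r_0):=\inf\{J_i(\mathbf r(1),t_f): (r_0,t_f)\in\pi,\ (\mathbf r,\mathbf u)\in\Pi^{\mathcal K,\mathcal C}_{r_0,t_f}\}$, $i=1,2$. *)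

theory Defs
  imports "HOL-Analysis.Analysis"
begin

text \<open>States are vectors in real^7; component i (i = 1..7) is r $ i
  (type 7 has the seven distinct elements 1,...,6,7=0).
  Controls are vectors in real^3 with components u $ 1, u $ 2, u $ 3.\<close>

record mission =
  Omega    :: real
  v_e      :: real
  m_dry    :: real
  m_prop   :: real
  rho_min  :: real
  rho_max  :: real
  pot      :: "real \<Rightarrow> real \<Rightarrow> real \<Rightarrow> real"
  pot_x    :: "real \<Rightarrow> real \<Rightarrow> real \<Rightarrow> real"
  pot_y    :: "real \<Rightarrow> real \<Rightarrow> real \<Rightarrow> real"
  pot_z    :: "real \<Rightarrow> real \<Rightarrow> real \<Rightarrow> real"
  ctrl_set :: "(real^3) set"
  r_target :: "real^7"
  eps      :: real

definition valid_mission :: "mission \<Rightarrow> bool" where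
  "valid_mission P \<longleftrightarrow>
     Omega P \<ge> 0 \<and> v_e P > 0 \<and> m_dry P > 0 \<and> m_prop P > 0 \<and>
     0 < rho_min P \<and> rho_min P < rho_max P \<and> eps P > 0 \<and>
     (\<forall>x y z. ((\<lambda>t. pot P t y z) has_real_derivative pot_x P x y z) (at x)) \<and>
     (\<forall>x y z. ((\<lambda>t. pot P x t z) has_real_derivative pot_y P x y z) (at y)) \<and>
     (\<forall>x y z. ((\<lambda>t. pot P x y t) has_real_derivative pot_z P x y z) (at z))"

definition m_min :: "mission \<Rightarrow> real" where "m_min P = m_dry P"
definition m_max :: "mission \<Rightarrow> real" where "m_max P = m_dry P + m_prop P"

definition ftil :: "mission \<Rightarrow> real^7 \<Rightarrow> real^3 \<Rightarrow> real^7" where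
  "ftil P r u = vector
     [ r$4, r$5, r$6,
       pot_x P (r$1) (r$2) (r$3) + (Omega P)\<^sup>2 * r$1 + 2 * Omega P * r$5 + u$1 / r$7,
       pot_y P (r$1) (r$2) (r$3) + (Omega P)\<^sup>2 * r$2 - 2 * Omega P * r$4 + u$2 / r$7,
       pot_z P (r$1) (r$2) (r$3) + u$3 / r$7,
       - sqrt ((u$1)\<^sup>2 + (u$2)\<^sup>2 + (u$3)\<^sup>2) / v_e P ]"

definition fdyn :: "mission \<Rightarrow> real^7 \<Rightarrow> real^3 \<Rightarrow> real \<Rightarrow> real^7" where
  "fdyn P r u tf = tf *\<^sub>R ftil P r u"

definition radius :: "real^7 \<Rightarrow> real" where
  "radius r = sqrt ((r$1)\<^sup>2 + (r$2)\<^sup>2 + (r$3)\<^sup>2)"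

definition K0 :: "mission \<Rightarrow> (real^7) set" where
  "K0 P = {r. rho_min P \<le> radius r \<and> radius r \<le> rho_max P \<and>
              m_min P < r$7 \<and> r$7 \<le> m_max P}"

text \<open>Exterior (unit) normals of K0 at r: one for each active boundary
  constraint (outer sphere, inner sphere, full-mass face).\<close>
definition ext_normals :: "mission \<Rightarrow> real^7 \<Rightarrow> (real^7) set" where
  "ext_normals P r =
     {\<eta>. (radius r = rho_max P \<and>
            \<eta> = vector [r$1 / radius r, r$2 / radius r, r$3 / radius r, 0, 0, 0, 0]) \<or>
         (radius r = rho_min P \<and>
            \<eta> = vector [- r$1 / radius r, - r$2 / radius r, - r$3 / radius r, 0, 0, 0, 0]) \<or>
         (r$7 = m_max P \<and> \<eta> = vector [0, 0, 0, 0, 0, 0, 1])}"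

definition Kset :: "mission \<Rightarrow> (real^7) set" where
  "Kset P = {r \<in> K0 P. \<exists>u \<in> ctrl_set P. \<forall>\<eta> \<in> ext_normals P r. ftil P r u \<bullet> \<eta> < 0}"

definition Cset :: "mission \<Rightarrow> (real^7) set" where
  "Cset P = {r \<in> Kset P. norm (r_target P - r) < eps P}"

text \<open>Admissible state/control pairs: u Lebesgue measurable on [0,1] with
  values in the control set, r a W^{1,1} (absolutely continuous) solution,
  i.e. r(s) = r0 + integral of the (integrable) dynamics from 0 to s.\<close>
definition Pi_set :: "mission \<Rightarrow> real^7 \<Rightarrow> real \<Rightarrow>
    ((real \<Rightarrow> real^7) \<times> (real \<Rightarrow> real^3)) set" where
  "Pi_set P r0 tf = {(r, u).
     u \<in> borel_measurable (lebesgue_on {0..1}) \<and>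
     (\<forall>s \<in> {0..1}. u s \<in> ctrl_set P) \<and>
     (\<lambda>s. fdyn P (r s) (u s) tf) absolutely_integrable_on {0..1} \<and>
     (\<forall>s \<in> {0..1}. r s = r0 + integral {0..s} (\<lambda>\<sigma>. fdyn P (r \<sigma>) (u \<sigma>) tf))}"

definition Pi_KC :: "mission \<Rightarrow> real^7 \<Rightarrow> real \<Rightarrow>
    ((real \<Rightarrow> real^7) \<times> (real \<Rightarrow> real^3)) set" where
  "Pi_KC P r0 tf = {(r, u) \<in> Pi_set P r0 tf.
     (\<forall>s \<in> {0..1}. r s \<in> Kset P) \<and> r 1 \<in> interior (Cset P)}"

definition pi_set :: "mission \<Rightarrow> ((real^7) \<times> real) set" where
  "pi_set P = {(r0, tf). r0 \<in> Kset P \<and> tf \<ge> 0 \<and> Pi_KC P r0 tf \<noteq> {}}"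

definition J1 :: "real^7 \<Rightarrow> real \<Rightarrow> real" where "J1 rf tf = - rf$7"
definition J2 :: "real^7 \<Rightarrow> real \<Rightarrow> real" where "J2 rf tf = tf"

definition z1star :: "mission \<Rightarrow> real^7 \<Rightarrow> real" where
  "z1star P r0 = Inf {J1 (r 1) tf | r u tf. (r0, tf) \<in> pi_set P \<and> (r, u) \<in> Pi_KC P r0 tf}"
definition z2star :: "mission \<Rightarrow> real^7 \<Rightarrow> real" where
  "z2star P r0 = Inf {J2 (r 1) tf | r u tf. (r0, tf) \<in> pi_set P \<and> (r, u) \<in> Pi_KC P r0 tf}"

text \<open>Theta_{r0}(mu) in [0,infinity]; m_prop/mu_1 is taken in the extended
  reals, so that it equals infinity when mu_1 = 0.\<close>
definition Theta :: "mission \<Rightarrow> (real^7 \<Rightarrow> real \<times> real \<Rightarrow> real) \<Rightarrow> real^7 \<Rightarrow>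
    real \<times> real \<Rightarrow> ereal" where
  "Theta P \<theta> r0 \<mu> = Inf {ereal \<tau> | \<tau>. \<tau> \<ge> 0 \<and>
      \<theta> r0 (z1star P r0 + fst \<mu> * \<tau>, z2star P r0 + snd \<mu> * \<tau>) \<le> 0 \<and>
      ereal \<tau> < ereal (m_prop P) / ereal (fst \<mu>)}"

definition Sigma_set :: "mission \<Rightarrow> (real^7 \<Rightarrow> real \<times> real \<Rightarrow> real) \<Rightarrow> real^7 \<Rightarrow>
    (ereal \<times> ereal) set" where
  "Sigma_set P \<theta> r0 = {(ereal (z1star P r0) + ereal (fst \<mu>) * Theta P \<theta> r0 \<mu>,
                          ereal (z2star P r0) + ereal (snd \<mu>) * Theta P \<theta> r0 \<mu>) | \<mu>.
      0 \<le> fst \<mu> \<and> fst \<mu> \<le> 1 \<and> 0 \<le> snd \<mu> \<and> snd \<mu> \<le> 1 \<and> fst \<mu> + snd \<mu> = 1}"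

end

theory Submission
  imports Defs
begin

lemma PiKC_r0:
  assumes "(x, v) \<in> Pi_KC P r0 tf"
  shows "r0 \<in> Kset P" "x 1 \<in> Kset P"
proof -
  have "x 0 = r0 + integral {0..0} (\<lambda>\<sigma>. fdyn P (x \<sigma>) (v \<sigma>) tf)"
    using assms unfolding Pi_KC_def Pi_set_def by auto
  hence "x 0 = r0" by simp
  moreover have "x 0 \<in> Kset P" "x 1 \<in> Kset P" using assms unfolding Pi_KC_def by auto
  ultimately show "r0 \<in> Kset P" "x 1 \<in> Kset P" by auto
qed

lemma J1_bounds:
  assumes "(x, v) \<in> Pi_KC P r0 tf"
  shows "- m_max P \<le> J1 (x 1) tf" "J1 (x 1) tf < - m_min P"
  using PiKC_r0(2)[OF assms] unfolding Kset_def K0_def J1_def by auto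

lemma z_lower:
  assumes "(x, v) \<in> Pi_KC P r0 tf" "tf \<ge> 0"
  shows "z1star P r0 \<le> J1 (x 1) tf" "z2star P r0 \<le> J2 (x 1) tf"
    "- m_max P \<le> z1star P r0" "0 \<le> z2star P r0"
proof -
  have pi: "(r0, tf) \<in> pi_set P" using assms PiKC_r0[OF assms(1)] unfolding pi_set_def by auto
  let ?A1 = "{J1 (r 1) tf | r u tf. (r0, tf) \<in> pi_set P \<and> (r, u) \<in> Pi_KC P r0 tf}"
  let ?A2 = "{J2 (r 1) tf | r u tf. (r0, tf) \<in> pi_set P \<and> (r, u) \<in> Pi_KC P r0 tf}"
  have m1: "J1 (x 1) tf \<in> ?A1" using pi assms by blast
  have m2: "J2 (x 1) tf \<in> ?A2" using pi assms by blast
  have lb1: "\<forall>a\<in>?A1. - m_max P \<le> a" using J1_bounds(1) by blast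
  have lb2: "\<forall>a\<in>?A2. 0 \<le> a" unfolding J2_def pi_set_def by auto
  have b1: "bdd_below ?A1" using lb1 by (meson bdd_below.I)
  have b2: "bdd_below ?A2" using lb2 by (meson bdd_below.I)
  show "z1star P r0 \<le> J1 (x 1) tf" unfolding z1star_def using cInf_lower[OF m1 b1] .
  show "z2star P r0 \<le> J2 (x 1) tf" unfolding z2star_def using cInf_lower[OF m2 b2] .
  show "- m_max P \<le> z1star P r0" unfolding z1star_def
    using cInf_greatest[of ?A1] m1 lb1 by blast
  show "0 \<le> z2star P r0" unfolding z2star_def
    using cInf_greatest[of ?A2] m2 lb2 by blast
qed

lemma main_lemma:
  fixes P :: mission and r0 :: "real^7" and \<theta> :: "real^7 \<Rightarrow> real \<times> real \<Rightarrow> real"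
  assumes valid: "valid_mission P"
    and hyp_i: "\<And>z1 z2. \<theta> r0 (z1, z2) \<le> 0 \<longleftrightarrow>
        (\<exists>tf \<ge> 0. \<exists>(r, u) \<in> Pi_KC P r0 tf. J1 (r 1) tf \<le> z1 \<and> J2 (r 1) tf \<le> z2)"
    and nonempty: "Pi_KC P r0 (z2star P r0) \<noteq> {}"
    and zS: "z \<in> Sigma_set P \<theta> r0"
    and ru: "(r, u) \<in> Pi_KC P r0 tf" and tf: "tf \<ge> 0"
    and le1: "ereal (J1 (r 1) tf) \<le> fst z" and le2: "ereal (J2 (r 1) tf) \<le> snd z"
    and xv: "(x, v) \<in> Pi_KC P r0 tf'" and tf': "tf' \<ge> 0"
    and lt1: "J1 (x 1) tf' < J1 (r 1) tf" and lt2: "J2 (x 1) tf' < J2 (r 1) tf"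
  shows False
proof -
  define z1 where "z1 = z1star P r0"
  define z2 where "z2 = z2star P r0"
  have mp: "m_prop P > 0" using valid unfolding valid_mission_def by auto
  obtain m1 m2 where mu: "0 \<le> m1" "m1 \<le> 1" "0 \<le> m2" "m2 \<le> 1" "m1 + m2 = 1"
    and zeq: "z = (ereal z1 + ereal m1 * Theta P \<theta> r0 (m1, m2),
                   ereal z2 + ereal m2 * Theta P \<theta> r0 (m1, m2))"
    using zS unfolding Sigma_set_def z1_def z2_def by auto
  define S where "S = {\<tau>. \<tau> \<ge> 0 \<and> \<theta> r0 (z1 + m1 * \<tau>, z2 + m2 * \<tau>) \<le> 0 \<and>
      ereal \<tau> < ereal (m_prop P) / ereal m1}"
  have Th: "Theta P \<theta> r0 (m1, m2) = Inf (ereal ` S)"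
    unfolding Theta_def S_def z1_def z2_def fst_conv snd_conv by (rule arg_cong[where f=Inf]) blast
  have x1: "z1 \<le> J1 (x 1) tf'" "z2 \<le> J2 (x 1) tf'" "- m_max P \<le> z1" "0 \<le> z2"
    using z_lower[OF xv tf'] unfolding z1_def z2_def by auto
  have inS: "\<tau> \<in> S" if "\<tau> \<ge> 0" "(w, wv) \<in> Pi_KC P r0 tw" "tw \<ge> 0"
     "J1 (w 1) tw \<le> z1 + m1 * \<tau>" "J2 (w 1) tw \<le> z2 + m2 * \<tau>"
     "ereal \<tau> < ereal (m_prop P) / ereal m1" for \<tau> w wv tw
  proof -
    have "\<theta> r0 (z1 + m1 * \<tau>, z2 + m2 * \<tau>) \<le> 0"
      using hyp_i that by blast
    thus ?thesis using that unfolding S_def by auto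
  qed
  show False
  proof (cases "m1 = 0")
    case True
    then have "fst z = ereal z1" using zeq by (simp add: zero_ereal_def[symmetric])
    then show False using le1 lt1 x1 by simp
  next
    case m1nz: False
    show False
    proof (cases "m2 = 0")
      case True
      then have "snd z = ereal z2" using zeq by (simp add: zero_ereal_def[symmetric])
      then show False using le2 lt2 x1 by simp
    next
      case m2nz: False
      have m1p: "m1 > 0" and m2p: "m2 > 0" using mu m1nz m2nz by auto
      have div: "ereal (m_prop P) / ereal m1 = ereal (m_prop P / m1)"
        using m1nz by (simp add: ereal_divide)
      obtain y yv where y: "(y, yv) \<in> Pi_KC P r0 z2" using nonempty unfolding z2_def by auto
      have y1: "z1 \<le> J1 (y 1) z2" using z_lower[OF y] x1 unfolding z1_def z2_def by auto
      have y2: "J1 (y 1) z2 < - m_min P" using J1_bounds[OF y] by auto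
      define \<tau>0 where "\<tau>0 = (J1 (y 1) z2 - z1) / m1"
      have "\<tau>0 \<in> S"
      proof (rule inS[OF _ y])
        show "0 \<le> \<tau>0" unfolding \<tau>0_def using y1 m1p by simp
        show "0 \<le> z2" using x1 by simp
        show "J1 (y 1) z2 \<le> z1 + m1 * \<tau>0" unfolding \<tau>0_def using m1p by simp
        show "J2 (y 1) z2 \<le> z2 + m2 * \<tau>0" unfolding J2_def \<tau>0_def using y1 m1p m2p by simp
        have "J1 (y 1) z2 - z1 < m_prop P" using y2 x1 unfolding m_min_def m_max_def by simp
        hence "\<tau>0 < m_prop P / m1" unfolding \<tau>0_def using m1p by (simp add: divide_strict_right_mono)
        thus "ereal \<tau>0 < ereal (m_prop P) / ereal m1" using div by simp
      qed
      hence Sne: "S \<noteq> {}" by auto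
      have Sbdd: "bdd_below S" unfolding S_def by (rule bdd_belowI[of _ 0]) auto
      define t where "t = Inf S"
      have Tht: "Theta P \<theta> r0 (m1, m2) = ereal t"
        using Th ereal_Inf'[OF Sbdd Sne] unfolding t_def by simp
      have r1: "J1 (r 1) tf \<le> z1 + m1 * t" using le1 zeq Tht by simp
      have r2: "J2 (r 1) tf \<le> z2 + m2 * t" using le2 zeq Tht by simp
      have tlt: "t < m_prop P / m1"
      proof -
        have "t \<le> \<tau>0" unfolding t_def using cInf_lower[OF \<open>\<tau>0 \<in> S\<close> Sbdd] .
        moreover have "\<tau>0 < m_prop P / m1" using \<open>\<tau>0 \<in> S\<close> div unfolding S_def by simp
        ultimately show ?thesis by simp
      qed
      define a1 where "a1 = (J1 (x 1) tf' - z1) / m1"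
      define a2 where "a2 = (J2 (x 1) tf' - z2) / m2"
      define \<tau> where "\<tau> = max a1 a2"
      have a1t: "a1 < t" unfolding a1_def using lt1 r1 m1p by (simp add: pos_divide_less_eq mult.commute)
      have a2t: "a2 < t" unfolding a2_def using lt2 r2 m2p by (simp add: pos_divide_less_eq mult.commute)
      have "\<tau> \<in> S"
      proof (rule inS[OF _ xv tf'])
        show "0 \<le> \<tau>" unfolding \<tau>_def a1_def using x1 m1p by (simp add: le_max_iff_disj)
        show "J1 (x 1) tf' \<le> z1 + m1 * \<tau>"
        proof -
          have "J1 (x 1) tf' = z1 + m1 * a1" unfolding a1_def using m1p by simp
          also have "\<dots> \<le> z1 + m1 * \<tau>" unfolding \<tau>_def using m1p by simp
          finally show ?thesis .
        qed
        show "J2 (x 1) tf' \<le> z2 + m2 * \<tau>"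
        proof -
          have "J2 (x 1) tf' = z2 + m2 * a2" unfolding a2_def using m2p by simp
          also have "\<dots> \<le> z2 + m2 * \<tau>" unfolding \<tau>_def using m2p by simp
          finally show ?thesis .
        qed
        have "\<tau> < m_prop P / m1" unfolding \<tau>_def using a1t a2t tlt by simp
        thus "ereal \<tau> < ereal (m_prop P) / ereal m1" using div by simp
      qed
      hence "t \<le> \<tau>" unfolding t_def using cInf_lower Sbdd by blast
      moreover have "\<tau> < t" unfolding \<tau>_def using a1t a2t by simp
      ultimately show False by simp
    qed
  qed
qed

theorem theorem1:
  fixes P :: mission and r0 :: "real^7" and \<theta> :: "real^7 \<Rightarrow> real \<times> real \<Rightarrow> real"
  assumes valid: "valid_mission P"
    and C_ne: "Cset P \<noteq> {}" and C_closed: "closed (Cset P)"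
    and hyp_i: "\<And>z1 z2. \<theta> r0 (z1, z2) \<le> 0 \<longleftrightarrow>
        (\<exists>tf \<ge> 0. \<exists>(r, u) \<in> Pi_KC P r0 tf. J1 (r 1) tf \<le> z1 \<and> J2 (r 1) tf \<le> z2)"
    and hyp_ii: "\<And>z1 z2 z1' z2'. z1 \<le> z1' \<Longrightarrow> z2 \<le> z2' \<Longrightarrow>
        \<theta> r0 (z1, z2) \<ge> \<theta> r0 (z1', z2')"
    and nonempty: "Pi_KC P r0 (z2star P r0) \<noteq> {}"
  shows "\<forall>z \<in> Sigma_set P \<theta> r0. \<forall>tf \<ge> 0. \<forall>(r, u) \<in> Pi_KC P r0 tf.
           ereal (J1 (r 1) tf) \<le> fst z \<and> ereal (J2 (r 1) tf) \<le> snd z \<longrightarrow>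
           \<not> (\<exists>tf' \<ge> 0. \<exists>(x, v) \<in> Pi_KC P r0 tf'.
                 J1 (x 1) tf' < J1 (r 1) tf \<and> J2 (x 1) tf' < J2 (r 1) tf)"
  using main_lemma[of P \<theta> r0, OF valid hyp_i nonempty] by blast

end
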